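(* Let $\mathscr B=\{b_k:k\ge1\}$ and $\mathscr B'=\{b'_k:k\ge1\}$ be subsets of $\{2,3,\dots\}$, each consisting of pairwise coprime integers with $\sum_k 1/b_k<\infty$ and $\sum_k1/b'_k<\infty$. Then: (a) $X_{\mathscr B}\subset X_{\mathscr B'}$ if and only if every $b'\in\mathscr B'$ is divisible by some $b\in\mathscr B$; (b) $X_{\mathscr B}=X_{\mathscr B'}$ if and only if $\mathscr B=\mathscr B'$.
   Context: For such a set $\mathscr B$, $X_{\mathscr B}$ denotes the $\mathscr B$-free subshift: the set of $y\in\{0,1\}^{\mathbb Z}$ all of whose finite blocks occur in $\eta$, where $\eta(n)=1$ iff $b\nmid n$ for all $b\in\mathscr B$ (else $0$). Equivalently, $X_{\mathscr B}$ is the set of $y\in\{0,1\}^{\mathbb Z}$ whose support $\mathrm{supp}(y)=\{n:y(n)=1\}$ is $\mathscr B$-admissible, i.e. $|\mathrm{supp}(y)\bmod b|<b$ for every $b\in\mathscr B$. *)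

theory Defs
  imports "HOL-Analysis.Analysis"
begin

text \<open>Configurations y in {0,1}^Z are modelled as predicates int => bool (True = 1).\<close>

definition eta :: "nat set \<Rightarrow> int \<Rightarrow> bool" where
  "eta B n \<longleftrightarrow> (\<forall>b\<in>B. \<not> int b dvd n)"

definition Bfree_subshift :: "nat set \<Rightarrow> (int \<Rightarrow> bool) set" where
  "Bfree_subshift B = {y. \<forall>m n. \<exists>k. \<forall>i. m \<le> i \<and> i \<le> n \<longrightarrow> y i = eta B (i + k)}"

definition admissible_base :: "nat set \<Rightarrow> bool" where
  "admissible_base B \<longleftrightarrow> B \<subseteq> {2..} \<and> infinite B \<and> pairwise coprime B
     \<and> (\<lambda>b. 1 / real b) summable_on B"

end

theory Submission
  imports Defs "HOL-Number_Theory.Cong"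
begin

lemma tail_lemma:
  assumes "(\<lambda>b. 1 / real b) summable_on B" "e > 0"
  shows "\<exists>T. \<forall>G. finite G \<longrightarrow> G \<subseteq> B \<longrightarrow> (\<forall>b\<in>G. b > T) \<longrightarrow> (\<Sum>b\<in>G. 1 / real b) < e"
proof -
  define f where "f = (\<lambda>b::nat. 1 / real b)"
  obtain S where hs: "(f has_sum S) B" using assms(1) summable_on_def f_def by blast
  hence "eventually (\<lambda>X. dist (sum f X) S < e/2) (finite_subsets_at_top B)"
    using assms(2) unfolding has_sum_def tendsto_iff by (metis half_gt_zero)
  then obtain X where X: "finite X" "X \<subseteq> B"
    "\<And>Y. finite Y \<Longrightarrow> X \<subseteq> Y \<Longrightarrow> Y \<subseteq> B \<Longrightarrow> dist (sum f Y) S < e/2"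
    unfolding eventually_finite_subsets_at_top by metis
  show ?thesis
  proof (intro exI[of _ "Max (insert 0 X)"] allI impI)
    fix G assume G: "finite G" "G \<subseteq> B" "\<forall>b\<in>G. b > Max (insert 0 X)"
    have disj: "X \<inter> G = {}"
    proof (rule ccontr)
      assume "X \<inter> G \<noteq> {}"
      then obtain b where "b \<in> X" "b \<in> G" by blast
      then have "b \<le> Max (insert 0 X)" using X(1) by simp
      then show False using G(3) \<open>b \<in> G\<close> by force
    qed
    have su: "sum f (X \<union> G) = sum f X + sum f G" using disj X(1) G(1) by (simp add: sum.union_disjoint)
    have d1: "dist (sum f (X \<union> G)) S < e/2" using X G by (intro X(3)) auto
    have d2: "dist (sum f X) S < e/2" using X by (intro X(3)) auto
    show "(\<Sum>b\<in>G. 1 / real b) < e" using d1 d2 su unfolding f_def[symmetric] dist_real_def by linarith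
  qed
qed

lemma card_res_class:
  fixes b L :: nat and M a :: int
  assumes "b > 0" "coprime (int b) M"
  shows "real (card {t\<in>{0..<int L}. int b dvd a + M*t}) \<le> real L / real b + 1"
proof (cases "{t\<in>{0..<int L}. int b dvd a + M*t} = {}")
  case True then show ?thesis unfolding True by (simp add: add_nonneg_nonneg)
next
  case False
  define R where "R = {t\<in>{0..<int L}. int b dvd a + M*t}"
  have Lpos: "L > 0" using False by auto
  have inj: "inj_on (\<lambda>t. t div int b) R"
  proof (rule inj_onI)
    fix x z assume x: "x \<in> R" and z: "z \<in> R" and e: "x div int b = z div int b"
    have "int b dvd (a + M*x) - (a + M*z)" using x z unfolding R_def by (intro dvd_diff) auto
    hence "int b dvd M*(x - z)" by (simp add: algebra_simps)
    hence "int b dvd x - z" using assms(2) by (simp add: coprime_dvd_mult_right_iff)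
    hence "x mod int b = z mod int b" by (simp add: mod_eq_dvd_iff)
    thus "x = z" using e by (metis div_mult_mod_eq)
  qed
  have img: "(\<lambda>t. t div int b) ` R \<subseteq> {0..(int L - 1) div int b}"
  proof
    fix y assume "y \<in> (\<lambda>t. t div int b) ` R"
    then obtain t where t: "t \<in> R" "y = t div int b" by blast
    have "0 \<le> t" "t \<le> int L - 1" using t unfolding R_def by auto
    thus "y \<in> {0..(int L - 1) div int b}" using t(2) assms(1) by (auto intro: zdiv_mono1 simp: pos_imp_zdiv_nonneg_iff)
  qed
  have "card R = card ((\<lambda>t. t div int b) ` R)" using inj by (simp add: card_image)
  also have "\<dots> \<le> card {0..(int L - 1) div int b}" using img by (intro card_mono) auto
  also have "\<dots> = nat ((int L - 1) div int b + 1)" by simp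
  finally have c: "card R \<le> nat ((int L - 1) div int b + 1)" .
  have q0: "(int L - 1) div int b \<ge> 0" using Lpos assms(1) by (simp add: pos_imp_zdiv_nonneg_iff)
  have "real_of_int ((int L - 1) div int b) \<le> real_of_int (int L - 1) / real_of_int (int b)"
    by (rule real_of_int_div4)
  also have "\<dots> \<le> real L / real b" using assms(1) by (simp add: divide_right_mono)
  finally have q: "real_of_int ((int L - 1) div int b) \<le> real L / real b" .
  have "real (card R) \<le> real (nat ((int L - 1) div int b + 1))" using c by linarith
  also have "\<dots> = real_of_int ((int L - 1) div int b) + 1" using q0 by simp
  finally show ?thesis using q unfolding R_def by linarith
qed

lemma density:
  fixes A :: "int set" and C :: "nat set" and M :: int
  assumes finA: "finite A" and Mpos: "M > 0" and cop: "\<forall>b\<in>C. coprime (int b) M"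
    and Cpos: "\<forall>b\<in>C. b > 0"
    and tailC: "\<forall>e>0. \<exists>T. \<forall>G. finite G \<longrightarrow> G \<subseteq> C \<longrightarrow> (\<forall>b\<in>G. b > T) \<longrightarrow> (\<Sum>b\<in>G. 1 / real b) < e"
    and small: "\<forall>G. finite G \<longrightarrow> G \<subseteq> C \<longrightarrow> real (card A) * (\<Sum>b\<in>G. 1 / real b) \<le> 1/4"
  shows "\<exists>t. \<forall>a\<in>A. \<forall>b\<in>C. \<not> int b dvd a + M*t"
proof (cases "A = {}")
  case True then show ?thesis by auto
next
  case False
  define n where "n = card A"
  have npos: "n > 0" using False finA n_def by (simp add: card_gt_0_iff)
  define K where "K = Max (insert 0 (abs ` A))"
  have K0: "K \<ge> 0" unfolding K_def using finA by simp
  have Ka: "\<And>a. a \<in> A \<Longrightarrow> \<bar>a\<bar> \<le> K" unfolding K_def using finA by simp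
  define d where "d = 1 / (8 * real n * real_of_int M)"
  have dpos: "d > 0" unfolding d_def using npos Mpos by simp
  obtain T0 where T0: "\<And>G. finite G \<Longrightarrow> G \<subseteq> C \<Longrightarrow> (\<forall>b\<in>G. b > T0) \<Longrightarrow> (\<Sum>b\<in>G. 1 / real b) < d"
    using tailC dpos by meson
  define L where "L = T0 + nat K + 4 * n + 1"
  define X where "X = nat K + nat M * L"
  have XL: "real X \<le> 2 * real_of_int M * real L"
  proof -
    have "real X = real_of_int K + real_of_int M * real L" unfolding X_def using K0 Mpos by simp
    also have "\<dots> \<le> real L + real_of_int M * real L" unfolding L_def using K0 by simp
    also have "\<dots> \<le> 2 * real_of_int M * real L"
    proof -
      have "1 \<le> real_of_int M" using Mpos by simp
      hence "real L \<le> real_of_int M * real L" using mult_right_mono[of 1 "real_of_int M" "real L"] by simp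
      thus ?thesis by simp
    qed
    finally show ?thesis .
  qed
  define R where "R = (\<lambda>a b. {t\<in>{0..<int L}. int b dvd a + M*t})"
  define C3 where "C3 = {b\<in>C. b \<le> X}"
  define C1 where "C1 = {b\<in>C. b \<le> L}"
  define C2 where "C2 = {b\<in>C. L < b \<and> b \<le> X}"
  define Z0 where "Z0 = {t\<in>{0..<int L}. \<exists>a\<in>A. a + M*t = 0}"
  define Bad where "Bad = {t\<in>{0..<int L}. \<exists>a\<in>A. \<exists>b\<in>C. int b dvd a + M*t}"
  have finC3: "finite C3" unfolding C3_def by (rule finite_subset[of _ "{..X}"]) auto
  have LX: "L \<le> X"
  proof -
    have "1 \<le> nat M" using Mpos by simp
    hence "L \<le> nat M * L" using mult_right_mono[of 1 "nat M" L] by simp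
    thus ?thesis unfolding X_def by linarith
  qed
  have C3U: "C3 = C1 \<union> C2" "C1 \<inter> C2 = {}" unfolding C1_def C2_def C3_def using LX by auto
  have finC1: "finite C1" "finite C2" using finC3 C3U by auto
  have BadSub: "Bad \<subseteq> Z0 \<union> (\<Union>a\<in>A. \<Union>b\<in>C3. R a b)"
  proof
    fix t assume "t \<in> Bad"
    then obtain a b where t: "t \<in> {0..<int L}" "a \<in> A" "b \<in> C" "int b dvd a + M*t"
      unfolding Bad_def by blast
    show "t \<in> Z0 \<union> (\<Union>a\<in>A. \<Union>b\<in>C3. R a b)"
    proof (cases "a + M*t = 0")
      case True then show ?thesis using t unfolding Z0_def by auto
    next
      case False
      have "int b \<le> \<bar>a + M*t\<bar>" using False t(4) by (metis dvd_abs_iff zdvd_imp_le zero_less_abs_iff)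
      also have "\<dots> \<le> \<bar>a\<bar> + M * t"
      proof -
        have "M * t \<ge> 0" using t Mpos by simp
        thus ?thesis by arith
      qed
      also have "\<dots> \<le> K + M * int L" 
      proof -
        have "M * t \<le> M * int L" using t(1) Mpos by (intro mult_left_mono) auto
        thus ?thesis using Ka[OF t(2)] by linarith
      qed
      also have "\<dots> = int X" unfolding X_def using K0 Mpos by simp
      finally have "b \<le> X" by simp
      then show ?thesis using t unfolding R_def C3_def by auto
    qed
  qed
  have cardZ0: "card Z0 \<le> n"
  proof -
    have "Z0 \<subseteq> (\<lambda>a. (-a) div M) ` A"
    proof
      fix t assume "t \<in> Z0"
      then obtain a where a: "a \<in> A" "a + M*t = 0" unfolding Z0_def by blast
      hence "-a = M*t" by simp
      hence "t = (-a) div M" using Mpos by simp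
      thus "t \<in> (\<lambda>a. (-a) div M) ` A" using a by blast
    qed
    hence "card Z0 \<le> card ((\<lambda>a. (-a) div M) ` A)" using finA by (intro card_mono) auto
    also have "\<dots> \<le> card A" using finA by (rule card_image_le)
    finally show ?thesis unfolding n_def .
  qed
  have sumR: "real (\<Sum>b\<in>C3. card (R a b)) \<le> real L * (\<Sum>b\<in>C3. 1 / real b) + real (card C3)" for a
  proof -
    have "real (\<Sum>b\<in>C3. card (R a b)) = (\<Sum>b\<in>C3. real (card (R a b)))" by simp
    also have "\<dots> \<le> (\<Sum>b\<in>C3. real L / real b + 1)"
    proof (intro sum_mono)
      fix b assume "b \<in> C3"
      hence "b \<in> C" unfolding C3_def by simp
      thus "real (card (R a b)) \<le> real L / real b + 1"
        unfolding R_def using cop Cpos by (intro card_res_class) auto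
    qed
    also have "\<dots> = real L * (\<Sum>b\<in>C3. 1 / real b) + real (card C3)"
      by (simp add: sum.distrib sum_distrib_left)
    finally show ?thesis .
  qed
  define s3 where "s3 = (\<Sum>b\<in>C3. 1 / real b)"
  define s1 where "s1 = (\<Sum>b\<in>C1. 1 / real b)"
  define s2 where "s2 = (\<Sum>b\<in>C2. 1 / real b)"
  have s13: "s1 \<le> s3" unfolding s1_def s3_def using finC3 C3U by (intro sum_mono2) auto
  have ns3: "real n * s3 \<le> 1/4" unfolding s3_def n_def using small finC3 by (auto simp: C3_def)
  have s2d: "s2 < d" unfolding s2_def using finC1 by (intro T0) (auto simp: C2_def L_def)
  have cC1: "real (card C1) \<le> real L * s1"
  proof -
    have "real (card C1) = (\<Sum>b\<in>C1. 1)" by simp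
    also have "\<dots> \<le> (\<Sum>b\<in>C1. real L / real b)"
    proof (intro sum_mono)
      fix b assume "b \<in> C1"
      hence "b > 0" "b \<le> L" using Cpos unfolding C1_def by auto
      thus "1 \<le> real L / real b" by simp
    qed
    also have "\<dots> = real L * s1" unfolding s1_def by (simp add: sum_distrib_left)
    finally show ?thesis .
  qed
  have cC2: "real (card C2) \<le> real X * s2"
  proof -
    have "real (card C2) = (\<Sum>b\<in>C2. 1)" by simp
    also have "\<dots> \<le> (\<Sum>b\<in>C2. real X / real b)"
    proof (intro sum_mono)
      fix b assume "b \<in> C2"
      hence "b > 0" "b \<le> X" using Cpos unfolding C2_def by auto
      thus "1 \<le> real X / real b" by simp
    qed
    also have "\<dots> = real X * s2" unfolding s2_def by (simp add: sum_distrib_left)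
    finally show ?thesis .
  qed
  have cC3: "real (card C3) = real (card C1) + real (card C2)"
    using C3U finC1 by (simp add: card_Un_disjoint)
  have perA: "real (\<Sum>b\<in>C3. card (R a b)) \<le> 2 * real L * s3 + real X * s2" for a
  proof -
    have "real L * s1 \<le> real L * s3" by (intro mult_left_mono s13) auto
    thus ?thesis using sumR[of a] cC1 cC2 cC3 unfolding s3_def[symmetric] by linarith
  qed
  have finR: "finite (R a b)" for a b unfolding R_def by (rule finite_subset[of _ "{0..<int L}"]) auto
  have finZ0: "finite Z0" unfolding Z0_def by (rule finite_subset[of _ "{0..<int L}"]) auto
  have "card Bad \<le> card (Z0 \<union> (\<Union>a\<in>A. \<Union>b\<in>C3. R a b))"
    using BadSub finA finC3 finR finZ0 by (intro card_mono) auto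
  also have "\<dots> \<le> card Z0 + card (\<Union>a\<in>A. \<Union>b\<in>C3. R a b)" by (rule card_Un_le)
  also have "card (\<Union>a\<in>A. \<Union>b\<in>C3. R a b) \<le> (\<Sum>a\<in>A. card (\<Union>b\<in>C3. R a b))"
    by (rule card_UN_le[OF finA])
  also have "(\<Sum>a\<in>A. card (\<Union>b\<in>C3. R a b)) \<le> (\<Sum>a\<in>A. \<Sum>b\<in>C3. card (R a b))"
    by (intro sum_mono card_UN_le[OF finC3])
  finally have cB: "card Bad \<le> card Z0 + (\<Sum>a\<in>A. \<Sum>b\<in>C3. card (R a b))" by simp
  have "real (\<Sum>a\<in>A. \<Sum>b\<in>C3. card (R a b)) = (\<Sum>a\<in>A. real (\<Sum>b\<in>C3. card (R a b)))"
    by simp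
  also have "\<dots> \<le> (\<Sum>a\<in>A. 2 * real L * s3 + real X * s2)" by (intro sum_mono perA)
  also have "\<dots> = real n * (2 * real L * s3 + real X * s2)" unfolding n_def by simp
  also have "\<dots> = 2 * real L * (real n * s3) + real n * real X * s2" by (simp add: algebra_simps)
  also have "\<dots> \<le> 2 * real L * (1/4) + real n * real X * d"
  proof -
    have "2 * real L * (real n * s3) \<le> 2 * real L * (1/4)" using ns3 by (intro mult_left_mono) auto
    moreover have "real n * real X * s2 \<le> real n * real X * d" using s2d by (intro mult_left_mono) auto
    ultimately show ?thesis by linarith
  qed
  also have "real n * real X * d = real X / (8 * real_of_int M)" unfolding d_def using npos by simp
  also have "\<dots> \<le> real L / 4" using XL Mpos by (simp add: divide_simps mult.commute mult.left_commute)
  finally have "real (\<Sum>a\<in>A. \<Sum>b\<in>C3. card (R a b)) \<le> 3 * real L / 4" by simp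
  with cB cardZ0 have "real (card Bad) \<le> real n + 3 * real L / 4" by linarith
  also have "\<dots> < real L" unfolding L_def by simp
  finally have "card Bad < card {0..<int L}" by simp
  hence "\<not> {0..<int L} \<subseteq> Bad"
  proof (intro notI)
    assume "card Bad < card {0..<int L}" "{0..<int L} \<subseteq> Bad"
    have "finite Bad" unfolding Bad_def by (rule finite_subset[of _ "{0..<int L}"]) auto
    hence "card {0..<int L} \<le> card Bad" using \<open>{0..<int L} \<subseteq> Bad\<close> by (intro card_mono)
    thus False using \<open>card Bad < card {0..<int L}\<close> by simp
  qed
  then obtain t where "t \<in> {0..<int L}" "t \<notin> Bad" by blast
  hence "\<forall>a\<in>A. \<forall>b\<in>C. \<not> int b dvd a + M*t" unfolding Bad_def by blast
  thus ?thesis by blast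
qed

lemma X_imp_adm:
  assumes y: "y \<in> Bfree_subshift B" and bB: "b \<in> B" and bpos: "b > 0"
  shows "\<exists>r. \<forall>i. y i \<longrightarrow> \<not> int b dvd (i - r)"
proof (rule ccontr)
  assume "\<not> ?thesis"
  hence "\<forall>r. \<exists>i. y i \<and> int b dvd (i - r)" by blast
  then obtain f where f: "\<And>r. y (f r) \<and> int b dvd (f r - r)" by metis
  define I where "I = f ` {0..<int b}"
  have finI: "finite I" and neI: "I \<noteq> {}" unfolding I_def using bpos by auto
  obtain k where k: "\<forall>i. Min I \<le> i \<and> i \<le> Max I \<longrightarrow> y i = eta B (i + k)"
    using y unfolding Bfree_subshift_def by blast
  define r where "r = (-k) mod int b"
  have rI: "f r \<in> I" unfolding I_def r_def using bpos by auto
  have "Min I \<le> f r" "f r \<le> Max I" using rI finI by auto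
  hence e: "y (f r) = eta B (f r + k)" using k by blast
  have "int b dvd f r - r" using f by blast
  moreover have "int b dvd r - (-k)" unfolding r_def using mod_eq_dvd_iff[of "(-k) mod int b" "int b" "-k"] by simp
  ultimately have "int b dvd (f r - r) + (r - (-k))" by (rule dvd_add)
  hence "int b dvd f r + k" by simp
  hence "\<not> eta B (f r + k)" unfolding eta_def using bB by blast
  thus False using e f by blast
qed

lemma adm_imp_X:
  assumes adm: "admissible_base B" and ad: "\<forall>b\<in>B. \<exists>r. \<forall>i. y i \<longrightarrow> \<not> int b dvd (i - r)"
  shows "y \<in> Bfree_subshift B"
  unfolding Bfree_subshift_def
proof (intro CollectI allI)
  fix m n :: int
  show "\<exists>k. \<forall>i. m \<le> i \<and> i \<le> n \<longrightarrow> y i = eta B (i + k)"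
  proof (cases "n < m")
    case True then show ?thesis by auto
  next
    case False
    have B2: "\<forall>b\<in>B. b \<ge> 2" and infB: "infinite B" and copB: "pairwise coprime B"
      and summ: "(\<lambda>b. 1 / real b) summable_on B" using adm unfolding admissible_base_def by auto
    obtain r where r: "\<And>b i. b \<in> B \<Longrightarrow> y i \<Longrightarrow> \<not> int b dvd (i - r b)" using ad by metis
    define W where "W = {m..n}"
    define S where "S = {i\<in>W. y i}"
    define Z where "Z = {i\<in>W. \<not> y i}"
    define N where "N = nat (n - m) + 1"
    have finS: "finite S" unfolding S_def by (rule finite_subset[of _ W]) (auto simp: W_def)
    have finZ: "finite Z" unfolding Z_def by (rule finite_subset[of _ W]) (auto simp: W_def)
    define s where "s = card S"
    have epos: "1 / (4 * (real s + 1)) > 0" by simp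
    obtain T where T: "\<And>G. finite G \<Longrightarrow> G \<subseteq> B \<Longrightarrow> (\<forall>b\<in>G. b > T) \<Longrightarrow> (\<Sum>b\<in>G. 1 / real b) < 1 / (4 * (real s + 1))"
      using tail_lemma[OF summ epos] by blast
    define F where "F = {b\<in>B. b \<le> T}"
    have finF: "finite F" unfolding F_def by (rule finite_subset[of _ "{..T}"]) auto
    define Big where "Big = {b\<in>B. b > max T N}"
    have "Big = B - {..max T N}" unfolding Big_def by auto
    hence infBig: "infinite Big" using infB by auto
    obtain G where G: "G \<subseteq> Big" "finite G" "card G = card Z"
      using infinite_arbitrarily_large[OF infBig] by metis
    obtain g where g: "bij_betw g Z G" using finite_same_card_bij[OF finZ G(2)] G(3) by metis
    define I where "I = F \<union> G"
    have FG: "F \<inter> G = {}" using G(1) unfolding F_def Big_def by auto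
    have IB: "I \<subseteq> B" using G(1) unfolding I_def F_def Big_def by auto
    have finI: "finite I" unfolding I_def using finF G(2) by simp
    define u where "u = (\<lambda>b. if b \<in> F then nat ((- r b) mod int b) else nat ((- inv_into Z g b) mod int b))"
    have copI: "\<forall>i\<in>I. \<forall>j\<in>I. i \<noteq> j \<longrightarrow> coprime (id i) (id j)"
      using IB copB unfolding pairwise_def by auto
    obtain k0 :: nat where k0: "\<forall>b\<in>I. [k0 = u b] (mod id b)"
      using chinese_remainder_nat[OF finI copI] by blast
    have k0d: "int b dvd int k0 + x" if "b \<in> I" "u b = nat ((- x) mod int b)" for b x
    proof -
      have bp: "b > 0" using that IB B2 by force
      have "k0 mod b = u b mod b" using k0 that unfolding cong_def by simp
      hence "int k0 mod int b = int (u b) mod int b" by (metis of_nat_mod)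
      also have "int (u b) = (- x) mod int b" using that bp by simp
      finally have "int k0 mod int b = (- x) mod int b" by simp
      hence "int b dvd int k0 - (- x)" by (simp add: mod_eq_dvd_iff)
      thus ?thesis by simp
    qed
    have kF: "int b dvd int k0 + r b" if "b \<in> F" for b
      using that by (intro k0d) (auto simp: I_def u_def)
    have kG: "int (g z) dvd int k0 + z" if "z \<in> Z" for z
    proof -
      have gz: "g z \<in> G" "inv_into Z g (g z) = z" using g that
        by (auto simp: bij_betw_def)
      have "g z \<notin> F" using gz FG by blast
      thus ?thesis using gz by (intro k0d) (auto simp: I_def u_def)
    qed
    define M where "M = (\<Prod>b\<in>I. b)"
    have Mpos: "M > 0" unfolding M_def using IB B2 finI by (intro prod_pos) force
    have dvdM: "int b dvd int M" if "b \<in> I" for b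
    proof -
      have "b dvd M" unfolding M_def using dvd_prodI[OF finI that, of "\<lambda>b. b"] by simp
      thus ?thesis by (simp only: int_dvd_int_iff)
    qed
    define C where "C = B - I"
    define A where "A = (\<lambda>i. i + int k0) ` S"
    have cardA: "card A \<le> s" unfolding A_def s_def using finS by (rule card_image_le)
    have "\<exists>t. \<forall>a\<in>A. \<forall>b\<in>C. \<not> int b dvd a + int M * t"
    proof (rule density)
      show "finite A" unfolding A_def using finS by simp
      show "int M > 0" using Mpos by simp
      show "\<forall>b\<in>C. coprime (int b) (int M)"
      proof
        fix b assume b: "b \<in> C"
        have "coprime b M" unfolding M_def
        proof (rule prod_coprime_right)
          fix i assume "i \<in> I"
          moreover have "b \<noteq> i" "b \<in> B" using b \<open>i \<in> I\<close> unfolding C_def by auto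
          ultimately show "coprime b i" using IB copB unfolding pairwise_def by blast
        qed
        thus "coprime (int b) (int M)" by simp
      qed
      show "\<forall>b\<in>C. b > 0" using B2 unfolding C_def by force
      show "\<forall>e>0. \<exists>T. \<forall>G. finite G \<longrightarrow> G \<subseteq> C \<longrightarrow> (\<forall>b\<in>G. b > T) \<longrightarrow> (\<Sum>b\<in>G. 1 / real b) < e"
      proof (intro allI impI)
        fix e :: real assume "e > 0"
        obtain T' where T': "\<And>G. finite G \<Longrightarrow> G \<subseteq> B \<Longrightarrow> (\<forall>b\<in>G. b > T') \<Longrightarrow> (\<Sum>b\<in>G. 1 / real b) < e"
          using tail_lemma[OF summ \<open>e > 0\<close>] by blast
        have CB: "C \<subseteq> B" unfolding C_def by blast
        show "\<exists>T. \<forall>G. finite G \<longrightarrow> G \<subseteq> C \<longrightarrow> (\<forall>b\<in>G. b > T) \<longrightarrow> (\<Sum>b\<in>G. 1 / real b) < e"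
        proof (intro exI[of _ T'] allI impI)
          fix G'' assume "finite G''" "G'' \<subseteq> C" "\<forall>b\<in>G''. b > T'"
          thus "(\<Sum>b\<in>G''. 1 / real b) < e" using CB by (intro T') auto
        qed
      qed
      show "\<forall>G. finite G \<longrightarrow> G \<subseteq> C \<longrightarrow> real (card A) * (\<Sum>b\<in>G. 1 / real b) \<le> 1/4"
      proof (intro allI impI)
        fix G' assume G': "finite G'" "G' \<subseteq> C"
        have "\<forall>b\<in>G'. b > T" using G'(2) unfolding C_def I_def F_def by auto
        moreover have "G' \<subseteq> B" using G'(2) unfolding C_def by blast
        ultimately have lt: "(\<Sum>b\<in>G'. 1 / real b) < 1 / (4 * (real s + 1))" using G'(1) by (intro T) auto
        have nn: "(\<Sum>b\<in>G'. 1 / real b) \<ge> 0" by (intro sum_nonneg) auto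
        have "real (card A) * (\<Sum>b\<in>G'. 1 / real b) \<le> real s * (\<Sum>b\<in>G'. 1 / real b)"
          using cardA nn by (intro mult_right_mono) auto
        also have "\<dots> \<le> real s * (1 / (4 * (real s + 1)))" using lt by (intro mult_left_mono) auto
        also have "\<dots> \<le> 1/4"
        proof -
          have "real s * (1 / (4 * (real s + 1))) = (real s / (real s + 1)) / 4" by simp
          also have "real s / (real s + 1) \<le> 1" by simp
          finally show ?thesis by simp
        qed
        finally show "real (card A) * (\<Sum>b\<in>G'. 1 / real b) \<le> 1/4" .
      qed
    qed
    then obtain t where t: "\<And>a b. a \<in> A \<Longrightarrow> b \<in> C \<Longrightarrow> \<not> int b dvd a + int M * t" by blast
    define k where "k = int k0 + int M * t"
    have shift: "int b dvd i + k \<longleftrightarrow> int b dvd i + int k0" if "b \<in> I" for b i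
    proof -
      have "int b dvd int M * t" using dvdM[OF that] by simp
      hence "int b dvd (i + int k0) + int M * t \<longleftrightarrow> int b dvd i + int k0"
        by (simp add: dvd_add_left_iff)
      thus ?thesis unfolding k_def by (simp add: add.assoc)
    qed
    show ?thesis
    proof (intro exI[of _ k] allI impI)
      fix i assume iW: "m \<le> i \<and> i \<le> n"
      show "y i = eta B (i + k)"
      proof (cases "y i")
        case True
        have iS: "i \<in> S" using True iW unfolding S_def W_def by auto
        have "\<not> int b dvd i + k" if bB: "b \<in> B" for b
        proof
          assume d: "int b dvd i + k"
          show False
          proof (cases "b \<in> I")
            case False
            hence "b \<in> C" using bB unfolding C_def by simp
            moreover have "i + int k0 \<in> A" unfolding A_def using iS by blast
            ultimately have "\<not> int b dvd (i + int k0) + int M * t" using t by blast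
            thus False using d unfolding k_def by (simp add: add.assoc)
          next
            case bI: True
            hence d2: "int b dvd i + int k0" using shift d by blast
            show False
            proof (cases "b \<in> F")
              case True
              have "int b dvd (i + int k0) - (int k0 + r b)" using d2 kF[OF True] by (rule dvd_diff)
              hence "int b dvd i - r b" by simp
              thus False using r[OF bB \<open>y i\<close>] by blast
            next
              case False
              hence bG: "b \<in> G" using bI unfolding I_def by simp
              then obtain z where z: "z \<in> Z" "b = g z" using g unfolding bij_betw_def by auto
              have "int b dvd (i + int k0) - (int k0 + z)" using d2 kG[OF z(1)] z(2) by (intro dvd_diff) auto
              hence dz: "int b dvd i - z" by simp
              have "i \<noteq> z" using z(1) \<open>y i\<close> unfolding Z_def by auto
              hence "0 < \<bar>i - z\<bar>" by simp
              moreover have "int b dvd \<bar>i - z\<bar>" using dz by simp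
              ultimately have "int b \<le> \<bar>i - z\<bar>" by (rule zdvd_imp_le[rotated])
              moreover have "\<bar>i - z\<bar> \<le> n - m" using iW z(1) unfolding Z_def W_def by auto
              moreover have "b > N" using bG G(1) unfolding Big_def by auto
              ultimately show False unfolding N_def by linarith
            qed
          qed
        qed
        thus ?thesis using True unfolding eta_def by blast
      next
        case False
        have iZ: "i \<in> Z" using False iW unfolding Z_def W_def by auto
        have gi: "g i \<in> G" using g iZ unfolding bij_betw_def by auto
        hence "g i \<in> I" "g i \<in> B" using IB unfolding I_def by auto
        moreover have "int (g i) dvd i + int k0" using kG[OF iZ] by (simp add: add.commute)
        ultimately have "int (g i) dvd i + k" using shift by blast
        hence "\<not> eta B (i + k)" unfolding eta_def using \<open>g i \<in> B\<close> by blast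
        thus ?thesis using False by simp
      qed
    qed
  qed
qed

lemma part_a:
  assumes aB: "admissible_base B" and aB': "admissible_base B'"
  shows "Bfree_subshift B \<subseteq> Bfree_subshift B' \<longleftrightarrow> (\<forall>b'\<in>B'. \<exists>b\<in>B. b dvd b')"
proof
  assume sub: "Bfree_subshift B \<subseteq> Bfree_subshift B'"
  have B2: "\<forall>b\<in>B. b \<ge> 2" and copB: "pairwise coprime B" using aB unfolding admissible_base_def by auto
  show "\<forall>b'\<in>B'. \<exists>b\<in>B. b dvd b'"
  proof (rule ballI, rule ccontr)
    fix b' assume b'B': "b' \<in> B'" and nd: "\<not> (\<exists>b\<in>B. b dvd b')"
    have b'2: "b' \<ge> 2" using aB' b'B' unfolding admissible_base_def by auto
    define F where "F = {b\<in>B. b \<le> b'}"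
    have finF: "finite F" unfolding F_def by (rule finite_subset[of _ "{..b'}"]) auto
    have copF: "\<forall>i\<in>F. \<forall>j\<in>F. i \<noteq> j \<longrightarrow> coprime (id i) (id j)"
      using copB unfolding F_def pairwise_def by auto
    have "\<exists>c. \<forall>b\<in>F. [c = (if b dvd j then 1 else 0)] (mod id b)" for j :: nat
      by (rule chinese_remainder_nat[OF finF copF])
    then obtain c where c: "\<And>j. \<forall>b\<in>F. [c j = (if b dvd j then 1 else 0)] (mod id b)" by metis
    define x where "x = (\<lambda>j::nat. int j + int b' * int (c j))"
    have xF: "\<not> int b dvd x j" if bF: "b \<in> F" for b j
    proof
      assume dx: "int b dvd x j"
      have bB: "b \<in> B" "b \<ge> 2" using bF B2 unfolding F_def by auto
      have cm: "c j mod b = (if b dvd j then 1 else 0) mod b" using c bF unfolding cong_def by simp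
      show False
      proof (cases "b dvd j")
        case True
        then have "c j mod b = 1" using cm bB by simp
        have "int (c j) mod int b = int (c j mod b)" by (simp only: of_nat_mod)
        also have "\<dots> = 1" using \<open>c j mod b = 1\<close> by simp
        also have "1 = 1 mod int b" using bB by simp
        finally have "int (c j) mod int b = 1 mod int b" .
        hence "int b dvd int (c j) - 1" by (simp add: mod_eq_dvd_iff)
        hence d1: "int b dvd int b' * (int (c j) - 1)" by simp
        have "int b dvd int j" using True by simp
        hence d2: "int b dvd int b' * int (c j)" using dx unfolding x_def by (simp add: dvd_add_right_iff)
        have "int b dvd int b' * int (c j) - int b' * (int (c j) - 1)" using d2 d1 by (rule dvd_diff)
        hence "int b dvd int b'" by (simp add: algebra_simps)
        hence "b dvd b'" by simp
        thus False using nd bB by blast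
      next
        case False
        then have "c j mod b = 0" using cm by simp
        hence "b dvd c j" by auto
        hence "int b dvd int b' * int (c j)" by simp
        hence "int b dvd int j" using dx unfolding x_def by (simp add: dvd_add_left_iff)
        thus False using False by simp
      qed
    qed
    define S where "S = x ` {0..<b'}"
    define y where "y = (\<lambda>i. i \<in> S)"
    have finS: "finite S" unfolding S_def by simp
    have cardS: "card S \<le> b'" unfolding S_def using card_image_le[of "{0..<b'}" x] by simp
    have yB: "y \<in> Bfree_subshift B"
    proof (rule adm_imp_X[OF aB], rule ballI)
      fix b assume bB: "b \<in> B"
      show "\<exists>r. \<forall>i. y i \<longrightarrow> \<not> int b dvd i - r"
      proof (cases "b \<le> b'")
        case True
        then have bF: "b \<in> F" using bB unfolding F_def by simp
        show ?thesis
        proof (intro exI[of _ 0] allI impI)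
          fix i assume "y i"
          then obtain j where "i = x j" unfolding y_def S_def by blast
          thus "\<not> int b dvd i - 0" using xF[OF bF] by simp
        qed
      next
        case False
        have "card ((\<lambda>i. i mod int b) ` S) \<le> card S" using finS by (rule card_image_le)
        hence lt: "card ((\<lambda>i. i mod int b) ` S) < card {0..<int b}" using cardS False by simp
        have "\<not> {0..<int b} \<subseteq> (\<lambda>i. i mod int b) ` S"
        proof
          assume "{0..<int b} \<subseteq> (\<lambda>i. i mod int b) ` S"
          hence "card {0..<int b} \<le> card ((\<lambda>i. i mod int b) ` S)" using finS by (intro card_mono) auto
          thus False using lt by simp
        qed
        then obtain r where r: "r \<in> {0..<int b}" "r \<notin> (\<lambda>i. i mod int b) ` S" by blast
        show ?thesis
        proof (intro exI[of _ r] allI impI notI)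
          fix i assume yi: "y i" and d: "int b dvd i - r"
          have "i mod int b = r mod int b" using d by (simp add: mod_eq_dvd_iff)
          also have "\<dots> = r" using r(1) by simp
          finally show False using r(2) yi unfolding y_def by force
        qed
      qed
    qed
    then have "y \<in> Bfree_subshift B'" using sub by blast
    from X_imp_adm[OF this b'B'] b'2 obtain r where r: "\<forall>i. y i \<longrightarrow> \<not> int b' dvd i - r" by auto
    define j where "j = nat (r mod int b')"
    have jr: "int j = r mod int b'" unfolding j_def using b'2 by simp
    have "r mod int b' < int b'" using b'2 by simp
    hence "j < b'" using jr by linarith
    hence yx: "y (x j)" unfolding y_def S_def by auto
    have "int b' dvd x j - int j" unfolding x_def by simp
    moreover have "int b' dvd int j - r" unfolding jr using mod_eq_dvd_iff[of "r mod int b'" "int b'" r] by simp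
    ultimately have "int b' dvd (x j - int j) + (int j - r)" by (rule dvd_add)
    hence "int b' dvd x j - r" by simp
    thus False using r yx by blast
  qed
next
  assume dv: "\<forall>b'\<in>B'. \<exists>b\<in>B. b dvd b'"
  show "Bfree_subshift B \<subseteq> Bfree_subshift B'"
  proof
    fix y assume y: "y \<in> Bfree_subshift B"
    show "y \<in> Bfree_subshift B'"
    proof (rule adm_imp_X[OF aB'], rule ballI)
      fix b' assume "b' \<in> B'"
      then obtain b where b: "b \<in> B" "b dvd b'" using dv by blast
      have "b > 0" using b aB unfolding admissible_base_def by force
      then obtain r where r: "\<forall>i. y i \<longrightarrow> \<not> int b dvd i - r" using X_imp_adm[OF y b(1)] by blast
      have bb: "int b dvd int b'" using b(2) by simp
      show "\<exists>r. \<forall>i. y i \<longrightarrow> \<not> int b' dvd i - r"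
      proof (intro exI[of _ r] allI impI notI)
        fix i assume "y i" "int b' dvd i - r"
        hence "int b dvd i - r" using dvd_trans[OF bb] by blast
        thus False using r \<open>y i\<close> by blast
      qed
    qed
  qed
qed

lemma sub_lemma:
  assumes aP: "admissible_base P" and d1: "\<forall>b\<in>P. \<exists>b'\<in>Q. b' dvd b" and d2: "\<forall>b'\<in>Q. \<exists>b\<in>P. b dvd b'"
  shows "P \<subseteq> Q"
proof
  fix b assume bP: "b \<in> P"
  obtain b' where b': "b' \<in> Q" "b' dvd b" using d1 bP by blast
  obtain b'' where b'': "b'' \<in> P" "b'' dvd b'" using d2 b'(1) by blast
  have bb: "b'' dvd b" using b'' b' dvd_trans by blast
  have "b'' = b"
  proof (rule ccontr)
    assume ne: "b'' \<noteq> b"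
    have pc: "pairwise coprime P" using aP unfolding admissible_base_def by blast
    have "coprime b'' b" using pc bP b''(1) ne unfolding pairwise_def by blast
    hence "b'' = 1" using bb coprime_common_divisor_nat[of b'' b b''] by simp
    moreover have "P \<subseteq> {2..}" using aP unfolding admissible_base_def by blast
    hence "b'' \<ge> 2" using b''(1) by auto
    ultimately show False by simp
  qed
  hence "b = b'" using b' b'' dvd_antisym by blast
  thus "b \<in> Q" using b' by simp
qed

theorem mainTheorem13:
  fixes B B' :: "nat set"
  assumes "admissible_base B" and "admissible_base B'"
  shows "(Bfree_subshift B \<subseteq> Bfree_subshift B' \<longleftrightarrow> (\<forall>b'\<in>B'. \<exists>b\<in>B. b dvd b'))
       \<and> (Bfree_subshift B = Bfree_subshift B' \<longleftrightarrow> B = B')"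
proof -
  have a: "Bfree_subshift B \<subseteq> Bfree_subshift B' \<longleftrightarrow> (\<forall>b'\<in>B'. \<exists>b\<in>B. b dvd b')"
    by (rule part_a[OF assms])
  have a2: "Bfree_subshift B' \<subseteq> Bfree_subshift B \<longleftrightarrow> (\<forall>b\<in>B. \<exists>b'\<in>B'. b' dvd b)"
    by (rule part_a[OF assms(2,1)])
  have "Bfree_subshift B = Bfree_subshift B' \<longleftrightarrow> B = B'"
  proof
    assume eq: "Bfree_subshift B = Bfree_subshift B'"
    have d1: "\<forall>b'\<in>B'. \<exists>b\<in>B. b dvd b'" using a eq by blast
    have d2: "\<forall>b\<in>B. \<exists>b'\<in>B'. b' dvd b" using a2 eq by blast
    have "B \<subseteq> B'" using sub_lemma[OF assms(1) d2 d1] .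
    moreover have "B' \<subseteq> B" using sub_lemma[OF assms(2) d1 d2] .
    ultimately show "B = B'" by (rule subset_antisym)
  next
    assume "B = B'"
    thus "Bfree_subshift B = Bfree_subshift B'" by simp
  qed
  with a show ?thesis by blast
qed

end
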